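(* Let $n>1$, let $D$ be a set, let $f:\mathcal{S}^n\to D$ be a multidimensional rightward function, and let $\odot:D\times D\to D$ be a binary operator. The following are equivalent: (1) $f$ is $\odot$-homomorphic; (2) $f$ is memoryless, witnessed by some rightward or leftward $g:\mathcal{S}^{n-1}\to D$ and some $\oplus:D\times D\to D$ with $f(\sigma\bullet[\delta])=f(\sigma)\oplus g(\delta)$ for all $\sigma\in\mathcal{S}^n,\delta\in\mathcal{S}^{n-1}$, and the summarized version $h:\mathcal{S}_D\to D$ of $f$, defined by $h([])=f([])$ and $h(x\bullet[a])=h(x)\oplus a$ for all $x\in\mathcal{S}_D,a\in D$, is $\odot$-homomorphic.
   Context: $\mathit{Sc}$ is a set of scalars. $\mathcal{S}^0=\mathit{Sc}$ and, for $n\ge1$, $\mathcal{S}^n$ is the set of finite sequences of elements of $\mathcal{S}^{n-1}$; $\mathcal{S}_D$ is the set of finite sequences over $D$; $\bullet$ is concatenation, $[]$ the empty sequence, $[a]$ a one-element sequence. A function $g$ on sequences is rightward if there is an operator $\oplus'$ with $g(x\bullet[a])=g(x)\oplus' a$ for all $x,a$; leftward if there is $\otimes'$ with $g([a]\bullet x)=a\otimes' g(x)$. A function $f:\mathcal{S}^n\to D$ ($n>1$) is multidimensional rightward if there exist a family $\mathbb{G}:D\to(\mathcal{S}^{n-1}\to D)$ of rightward (or leftward) functions and an operator $\otimes:D\times D\to D$ such that $f(\sigma\bullet[\delta])=f(\sigma)\otimes\mathbb{G}(f(\sigma))(\delta)$ for all $\sigma\in\mathcal{S}^n,\delta\in\mathcal{S}^{n-1}$.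 A function $F$ on sequences is $\odot$-homomorphic if $F(x\bullet y)=F(x)\odot F(y)$ for all $x,y$. *)

theory Defs
  imports Main
begin

text \<open>S^(n-1) is represented as the type 'c list, where the
  (arbitrary) type 'c plays the role of S^(n-2); S^n is then 'c list list.\<close>

definition rightward :: "('x list \<Rightarrow> 'd) \<Rightarrow> bool" where
  "rightward g \<longleftrightarrow> (\<exists>opr :: 'd \<Rightarrow> 'x \<Rightarrow> 'd. \<forall>x a. g (x @ [a]) = opr (g x) a)"

definition leftward :: "('x list \<Rightarrow> 'd) \<Rightarrow> bool" where
  "leftward g \<longleftrightarrow> (\<exists>opl :: 'x \<Rightarrow> 'd \<Rightarrow> 'd. \<forall>x a. g ([a] @ x) = opl a (g x))"

definition homomorphic :: "('x list \<Rightarrow> 'd) \<Rightarrow> ('d \<Rightarrow> 'd \<Rightarrow> 'd) \<Rightarrow> bool" where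
  "homomorphic F odot \<longleftrightarrow> (\<forall>x y. F (x @ y) = odot (F x) (F y))"

definition multidim_rightward :: "('c list list \<Rightarrow> 'd) \<Rightarrow> bool" where
  "multidim_rightward f \<longleftrightarrow>
     (\<exists>(G :: 'd \<Rightarrow> 'c list \<Rightarrow> 'd) (otimes :: 'd \<Rightarrow> 'd \<Rightarrow> 'd).
        (\<forall>d. rightward (G d) \<or> leftward (G d)) \<and>
        (\<forall>\<sigma> \<delta>. f (\<sigma> @ [\<delta>]) = otimes (f \<sigma>) (G (f \<sigma>) \<delta>)))"

definition memoryless_wit :: "('c list list \<Rightarrow> 'd) \<Rightarrow> ('c list \<Rightarrow> 'd) \<Rightarrow> ('d \<Rightarrow> 'd \<Rightarrow> 'd) \<Rightarrow> bool" where
  "memoryless_wit f g oplus \<longleftrightarrow>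
     (rightward g \<or> leftward g) \<and> (\<forall>\<sigma> \<delta>. f (\<sigma> @ [\<delta>]) = oplus (f \<sigma>) (g \<delta>))"

definition summarized :: "('c list list \<Rightarrow> 'd) \<Rightarrow> ('d \<Rightarrow> 'd \<Rightarrow> 'd) \<Rightarrow> 'd list \<Rightarrow> 'd" where
  "summarized f oplus = foldl oplus (f [])"

lemma summarized_Nil: "summarized f oplus [] = f []"
  by (simp add: summarized_def)

lemma summarized_snoc: "summarized f oplus (x @ [a]) = oplus (summarized f oplus x) a"
  by (simp add: summarized_def)

end

theory Submission
  imports Defs
begin

lemma f_as_h:
  assumes "\<forall>\<sigma> \<delta>. f (\<sigma> @ [\<delta>]) = oplus (f \<sigma>) (g \<delta>)"
  shows "f s = summarized f oplus (map g s)"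
proof (induction s rule: rev_induct)
  case Nil then show ?case by (simp add: summarized_Nil)
next
  case (snoc x xs) then show ?case using assms by (simp add: summarized_snoc)
qed

theorem theorem4p7:
  fixes f :: "'c list list \<Rightarrow> 'd" and odot :: "'d \<Rightarrow> 'd \<Rightarrow> 'd"
  assumes "multidim_rightward f"
  shows "homomorphic f odot \<longleftrightarrow>
           (\<exists>(g :: 'c list \<Rightarrow> 'd) (oplus :: 'd \<Rightarrow> 'd \<Rightarrow> 'd).
              memoryless_wit f g oplus \<and> homomorphic (summarized f oplus) odot)"
proof
  assume H: "homomorphic f odot"
  from assms obtain G :: "'d \<Rightarrow> 'c list \<Rightarrow> 'd" and otimes :: "'d \<Rightarrow> 'd \<Rightarrow> 'd" where
    G1: "\<forall>d. rightward (G d) \<or> leftward (G d)" and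
    G2: "\<forall>\<sigma> \<delta>. f (\<sigma> @ [\<delta>]) = otimes (f \<sigma>) (G (f \<sigma>) \<delta>)"
    unfolding multidim_rightward_def by blast
  define g where "g = G (f [])"
  have fs: "f [\<delta>] = otimes (f []) (g \<delta>)" for \<delta>
    using G2[rule_format, of "[]" \<delta>] by (simp add: g_def)
  define w where "w v = (if \<exists>\<delta>. g \<delta> = v then [SOME \<delta>. g \<delta> = v] else [])" for v
  define oplus where "oplus u v = odot u (f (w v))" for u v
  have wg: "f (w (g \<delta>)) = f [\<delta>]" for \<delta>
  proof -
    have "g (SOME d. g d = g \<delta>) = g \<delta>" by (rule someI) simp
    then have "f [SOME d. g d = g \<delta>] = f [\<delta>]" by (simp add: fs)
    moreover have "w (g \<delta>) = [SOME d. g d = g \<delta>]" proof -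
      have "\<exists>d. g d = g \<delta>" by blast
      then show ?thesis by (simp only: w_def if_True)
    qed
    ultimately show ?thesis by simp
  qed
  have Hx: "f (x @ y) = odot (f x) (f y)" for x y
    using H unfolding homomorphic_def by blast
  have fh: "\<forall>\<sigma> \<delta>. f (\<sigma> @ [\<delta>]) = oplus (f \<sigma>) (g \<delta>)"
    using Hx wg by (simp add: oplus_def)
  have mw: "memoryless_wit f g oplus"
    unfolding memoryless_wit_def using fh G1 g_def by blast
  have hW: "summarized f oplus x = f (concat (map w x))" for x
  proof (induction x rule: rev_induct)
    case Nil then show ?case by (simp add: summarized_Nil)
  next
    case (snoc a xs) then show ?case
      using Hx by (simp add: summarized_snoc oplus_def)
  qed
  have "homomorphic (summarized f oplus) odot"
    unfolding homomorphic_def hW using Hx by simp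
  then show "\<exists>g oplus. memoryless_wit f g oplus \<and> homomorphic (summarized f oplus) odot"
    using mw by blast
next
  assume "\<exists>g oplus. memoryless_wit f g oplus \<and> homomorphic (summarized f oplus) odot"
  then obtain g oplus where m: "memoryless_wit f g oplus"
    and h: "homomorphic (summarized f oplus) odot" by blast
  have e: "\<forall>\<sigma> \<delta>. f (\<sigma> @ [\<delta>]) = oplus (f \<sigma>) (g \<delta>)"
    using m by (simp add: memoryless_wit_def)
  show "homomorphic f odot"
    unfolding homomorphic_def
  proof (intro allI)
    fix x y
    show "f (x @ y) = odot (f x) (f y)"
    proof -
      have hh: "summarized f oplus (map g x @ map g y) = odot (summarized f oplus (map g x)) (summarized f oplus (map g y))"
        using h unfolding homomorphic_def by blast
      have "f (x @ y) = summarized f oplus (map g (x @ y))" by (rule f_as_h[OF e])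
      also have "\<dots> = odot (summarized f oplus (map g x)) (summarized f oplus (map g y))"
        using hh by simp
      also have "\<dots> = odot (f x) (f y)" using f_as_h[OF e, of x] f_as_h[OF e, of y] by simp
      finally show ?thesis .
    qed
  qed
qed

end
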